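(* Let $\Lambda=(\lambda_1,\dots,\lambda_m)\in\mathbb{R}^m$, whose pairwise distinct values are $\eta_1,\dots,\eta_r$ (with multiplicities), and let $B_\Lambda$ be the exponential B-spline $$B_\Lambda=e^{\lambda_1(\cdot)}\chi_{[0,1)}*e^{\lambda_2(\cdot)}\chi_{[0,1)}*\dots*e^{\lambda_m(\cdot)}\chi_{[0,1)}.$$ For $1\le n\le r$ let $D_n$ be the differential operator $D_nf(x)=e^{\eta_n x}\frac{d}{dx}\bigl(e^{-\eta_n x}f(x)\bigr)$. Then there exists $x_0\in\mathbb{R}$ such that $\mathrm ZB_\Lambda(\cdot,\tfrac12)$ is monotone on $[x_0+k,x_0+k+1)$ for all $k\in\mathbb{Z}$, and for each $1\le n\le r$ there exists $y_0\in\mathbb{R}$ such that $D_n\mathrm ZB_\Lambda(\cdot,\tfrac12)$ is monotone on $[y_0+k,y_0+k+1)$ for all $k\in\mathbb{Z}$.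
   Context: The Zak transform is $\mathrm Zf(x,\omega)=\sum_{k\in\mathbb{Z}} f(x+k)e^{-2\pi i k\omega}$; in particular $\mathrm ZB_\Lambda(x,\tfrac12)=\sum_{k\in\mathbb{Z}}(-1)^kB_\Lambda(x+k)$. Here $\chi_{[0,1)}$ is the indicator function of $[0,1)$ and $*$ denotes convolution on $\mathbb{R}$. *)

theory Defs
  imports "HOL-Analysis.Analysis"
begin

definition echi :: "real \<Rightarrow> real \<Rightarrow> real" where
  "echi l x = (if 0 \<le> x \<and> x < 1 then exp (l * x) else 0)"

definition conv :: "(real \<Rightarrow> real) \<Rightarrow> (real \<Rightarrow> real) \<Rightarrow> real \<Rightarrow> real" where
  "conv f g x = integral UNIV (\<lambda>t. f t * g (x - t))"

fun expB :: "real list \<Rightarrow> real \<Rightarrow> real" where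
  "expB [] = (\<lambda>x. 0)"
| "expB [l] = echi l"
| "expB (l # l' # ls) = conv (echi l) (expB (l' # ls))"

definition zak_half :: "(real \<Rightarrow> real) \<Rightarrow> real \<Rightarrow> real" where
  "zak_half f x = (\<Sum>\<^sub>\<infinity>k\<in>(UNIV::int set). (-1) powi k * f (x + of_int k))"

text \<open>Right derivative (the functions involved are right-continuous piecewise smooth).\<close>
definition rderiv :: "(real \<Rightarrow> real) \<Rightarrow> real \<Rightarrow> real" where
  "rderiv f x = (THE D. (f has_real_derivative D) (at_right x))"

definition Dop :: "real \<Rightarrow> (real \<Rightarrow> real) \<Rightarrow> real \<Rightarrow> real" where
  "Dop eta f x = exp (eta * x) * rderiv (\<lambda>y. exp (- eta * y) * f y) x"

definition monotone_intv :: "real set \<Rightarrow> (real \<Rightarrow> real) \<Rightarrow> bool" where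
  "monotone_intv S f \<longleftrightarrow> mono_on S f \<or> antimono_on S f"

end

theory Submission
  imports Defs
begin

definition PCZ :: "(real \<Rightarrow> real) \<Rightarrow> bool" where
  "PCZ g \<longleftrightarrow> (\<forall>k::int. \<exists>h. continuous_on {real_of_int k..real_of_int k+1} h \<and>
      (\<forall>x\<in>{real_of_int k..<real_of_int k+1}. g x = h x))"

definition LI :: "(real \<Rightarrow> real) \<Rightarrow> bool" where
  "LI g \<longleftrightarrow> (\<forall>a b. g integrable_on {a..b})"

lemma PCZ_int_unit:
  assumes "PCZ g" shows "g integrable_on {real_of_int k..real_of_int k+1}"
proof -
  obtain h where h: "continuous_on {real_of_int k..real_of_int k+1} h"
    "\<forall>x\<in>{real_of_int k..<real_of_int k+1}. g x = h x"
    using assms unfolding PCZ_def by blast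
  have "h integrable_on {real_of_int k..real_of_int k+1}"
    using h(1) integrable_continuous_interval by blast
  then show ?thesis
    by (rule integrable_spike_finite[of "{real_of_int k+1}" _ g h, rotated 2]) (use h(2) in auto)
qed

lemma PCZ_int_range:
  assumes "PCZ g" shows "g integrable_on {real_of_int m..real_of_int m + real n}"
proof (induction n)
  case 0 then show ?case using integrable_on_refl[of g "real_of_int m"] by (simp add: cbox_interval)
next
  case (Suc n)
  have "g integrable_on {real_of_int (m + int n)..real_of_int (m + int n)+1}"
    by (rule PCZ_int_unit[OF assms])
  then have i2: "g integrable_on {real_of_int m + real n..real_of_int m + real n + 1}"
    by simp
  have X: "g integrable_on {real_of_int m..real_of_int m + real n + 1}"
    by (rule Henstock_Kurzweil_Integration.integrable_combine[OF _ _ Suc i2]) auto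
  have eq: "real_of_int m + real (Suc n) = real_of_int m + real n + 1" by simp
  show ?case by (subst eq) (rule X)
qed

lemma PCZ_LI: assumes "PCZ g" shows "LI g"
  unfolding LI_def
proof (intro allI)
  fix a b :: real
  show "g integrable_on {a..b}"
  proof (cases "a \<le> b")
    case False then show ?thesis by (simp add: integrable_on_empty)
  next
    case True
    define m where "m = floor a"
    define n where "n = nat (ceiling b - floor a)"
    have "g integrable_on {real_of_int m..real_of_int m + real n}" by (rule PCZ_int_range[OF assms])
    moreover have "{a..b} \<subseteq> {real_of_int m..real_of_int m + real n}"
    proof -
      have "real_of_int m \<le> a" unfolding m_def by linarith
      moreover have "b \<le> real_of_int m + real n" using True unfolding m_def n_def by linarith
      ultimately show ?thesis by auto
    qed
    ultimately show ?thesis by (rule integrable_on_subinterval)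
  qed
qed

lemma PCZ_cont: "continuous_on UNIV g \<Longrightarrow> PCZ g"
  unfolding PCZ_def by (metis continuous_on_subset subset_UNIV)

lemma PCZ_add: "PCZ f \<Longrightarrow> PCZ g \<Longrightarrow> PCZ (\<lambda>x. f x + g x)"
  unfolding PCZ_def
proof (intro allI)
  fix k :: int assume a: "\<forall>k::int. \<exists>h. continuous_on {real_of_int k..real_of_int k+1} h \<and>
      (\<forall>x\<in>{real_of_int k..<real_of_int k+1}. f x = h x)"
     "\<forall>k::int. \<exists>h. continuous_on {real_of_int k..real_of_int k+1} h \<and>
      (\<forall>x\<in>{real_of_int k..<real_of_int k+1}. g x = h x)"
  obtain h1 h2 where H: "continuous_on {real_of_int k..real_of_int k+1} h1"
    "(\<forall>x\<in>{real_of_int k..<real_of_int k+1}. f x = h1 x)"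
    "continuous_on {real_of_int k..real_of_int k+1} h2"
    "(\<forall>x\<in>{real_of_int k..<real_of_int k+1}. g x = h2 x)" using a by blast
  have C2: "continuous_on {real_of_int k..real_of_int k+1} (\<lambda>x. h1 x + h2 x)"
    by (rule continuous_on_add[OF H(1) H(3)])
  then show "\<exists>h. continuous_on {real_of_int k..real_of_int k+1} h \<and>
      (\<forall>x\<in>{real_of_int k..<real_of_int k+1}. f x + g x = h x)"
    using C2 H(2,4) by (intro exI[of _ "\<lambda>x. h1 x + h2 x"] conjI) auto
qed

lemma PCZ_mult: "continuous_on UNIV c \<Longrightarrow> PCZ g \<Longrightarrow> PCZ (\<lambda>x. c x * g x)"
  unfolding PCZ_def
proof (intro allI)
  fix k :: int assume c: "continuous_on UNIV c" and a: "\<forall>k::int. \<exists>h. continuous_on {real_of_int k..real_of_int k+1} h \<and>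
      (\<forall>x\<in>{real_of_int k..<real_of_int k+1}. g x = h x)"
  obtain h2 where H: "continuous_on {real_of_int k..real_of_int k+1} h2"
    "(\<forall>x\<in>{real_of_int k..<real_of_int k+1}. g x = h2 x)" using a by blast
  have C: "continuous_on {real_of_int k..real_of_int k+1} c" using c by (meson continuous_on_subset subset_UNIV)
  have C2: "continuous_on {real_of_int k..real_of_int k+1} (\<lambda>x. c x * h2 x)"
    by (rule continuous_on_mult[OF C H(1)])
  then show "\<exists>h. continuous_on {real_of_int k..real_of_int k+1} h \<and>
      (\<forall>x\<in>{real_of_int k..<real_of_int k+1}. c x * g x = h x)"
    using C2 H(2) by (intro exI[of _ "\<lambda>x. c x * h2 x"] conjI) auto
qed

lemma PCZ_cmult: "PCZ g \<Longrightarrow> PCZ (\<lambda>x. a * g x)"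
  using PCZ_mult[of "\<lambda>_. a" g] by simp

lemma PCZ_rcont:
  assumes "PCZ g" shows "continuous (at_right x) g"
proof -
  define k where "k = floor x"
  obtain h where h: "continuous_on {real_of_int k..real_of_int k+1} h"
    "\<forall>y\<in>{real_of_int k..<real_of_int k+1}. g y = h y"
    using assms unfolding PCZ_def by blast
  have x1: "real_of_int k \<le> x" "x < real_of_int k + 1" unfolding k_def by linarith+
  have xin: "x \<in> {real_of_int k..<real_of_int k+1}" using x1 by auto
  have "continuous (at x within {real_of_int k..real_of_int k+1}) h"
    using h(1) xin by (simp add: continuous_on_eq_continuous_within)
  then have "continuous (at x within {x..<real_of_int k+1}) h"
    by (rule continuous_within_subset) (use xin in auto)
  then have "continuous (at x within {x..<real_of_int k+1}) g"
    by (rule continuous_transform_within[where \<delta>=1]) (use xin h(2) in auto)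
  moreover have "at x within {x..<real_of_int k+1} = at_right x"
    using xin by (intro at_within_nhd[where S="{..<real_of_int k+1}"]) auto
  ultimately show ?thesis by simp
qed

lemma PCZ_isCont:
  assumes "PCZ g" "x \<notin> \<int>" shows "isCont g x"
proof -
  define k where "k = floor x"
  obtain h where h: "continuous_on {real_of_int k..real_of_int k+1} h"
    "\<forall>y\<in>{real_of_int k..<real_of_int k+1}. g y = h y"
    using assms unfolding PCZ_def by blast
  have x1: "real_of_int k \<le> x" "x < real_of_int k + 1" unfolding k_def by linarith+
  have x2: "real_of_int k \<noteq> x" using assms(2) by (metis Ints_of_int)
  have xin: "x \<in> {real_of_int k<..<real_of_int k+1}" using x1 x2 by auto
  have "isCont h x"
    by (rule continuous_on_interior[OF h(1)]) (use xin in simp)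
  then show ?thesis
    by (rule continuous_transform_within[where \<delta>="min (x - k) (k+1-x)"])
       (use xin h(2) in \<open>auto simp: dist_real_def abs_less_iff\<close>)
qed

definition Tl :: "real \<Rightarrow> (real \<Rightarrow> real) \<Rightarrow> real \<Rightarrow> real" where
  "Tl l g x = integral {0..1} (\<lambda>t. exp (l*t) * g (x - t))"

definition AP :: "(real \<Rightarrow> real) \<Rightarrow> bool" where
  "AP g \<longleftrightarrow> (\<forall>x. g (x+1) = - g x)"

definition INTR :: "(real \<Rightarrow> real) \<Rightarrow> (real \<Rightarrow> real) \<Rightarrow> bool" where
  "INTR F h \<longleftrightarrow> (\<forall>x y. x \<le> y \<longrightarrow> F y - F x = integral {x..y} h)"

lemma sub_int: fixes F :: "real \<Rightarrow> real" shows "integral {0..1} (\<lambda>t. F (x - t)) = integral {x-1..x} F"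
proof -
  have "integral {0..1} (\<lambda>t. F (x - t)) = integral {-0..-(-1)} (\<lambda>t. (F \<circ> (+) x) (-t))" by simp
  also have "\<dots> = integral {-1..0} (F \<circ> (+) x)"
    using Henstock_Kurzweil_Integration.integral_reflect_real[where f="F \<circ> (+) x" and a="-1" and b=0] by simp
  also have "\<dots> = integral {-1+x..0+x} F" by (rule integral_shift_Icc_real)
  finally show ?thesis by simp
qed

lemma sub_intble: fixes F :: "real \<Rightarrow> real" shows "F integrable_on {x-1..x} \<Longrightarrow> (\<lambda>t. F (x - t)) integrable_on {0..1}"
proof -
  assume "F integrable_on {x-1..x}"
  then have "F integrable_on {-1+x..0+x}" by simp
  then have "(F \<circ> (+) x) integrable_on {-1..0}" using integrable_on_shift_Icc_real[of F x "-1" 0] by simp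
  then have "(\<lambda>t. (F \<circ> (+) x) (-t)) integrable_on {-0..-(-1)}"
    using Henstock_Kurzweil_Integration.integrable_reflect_real[where f="F \<circ> (+) x" and a="-1" and b=0] by simp
  then show ?thesis by simp
qed

lemma exp_PCZ: "PCZ g \<Longrightarrow> PCZ (\<lambda>y. exp (a*y) * g y)"
  by (rule PCZ_mult[of "\<lambda>y. exp (a*y)"]) (intro continuous_intros)

lemma T_intble:
  assumes "PCZ g" shows "(\<lambda>t. exp (l*t) * g (x - t)) integrable_on {0..1}"
proof -
  have "(\<lambda>u. exp (-l*u) * g u) integrable_on {x-1..x}"
    using PCZ_LI[OF exp_PCZ[OF assms]] unfolding LI_def by blast
  then have "(\<lambda>t. exp (-l*(x-t)) * g (x-t)) integrable_on {0..1}"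
    by (rule sub_intble)
  then have "(\<lambda>t. (exp (-l*(x-t)) * g (x-t)) * exp (l*x)) integrable_on {0..1}"
    by (rule integrable_on_mult_left)
  moreover have E: "(\<lambda>t. (exp (-l*(x-t)) * g (x-t)) * exp (l*x)) = (\<lambda>t. exp (l*t) * g (x - t))"
  proof
    fix t
    have "exp (-l*(x-t)) * exp (l*x) = exp (l*t)" by (simp add: mult_exp_exp algebra_simps)
    then show "(exp (-l*(x-t)) * g (x-t)) * exp (l*x) = exp (l*t) * g (x - t)"
      by (metis mult.assoc mult.commute)
  qed
  ultimately show ?thesis by metis
qed

lemma T_repr: "Tl l g x = exp (l*x) * integral {x-1..x} (\<lambda>u. exp (-l*u) * g u)"
proof -
  have e: "(\<lambda>t. exp (l*t) * g (x - t)) = (\<lambda>t. (exp (-l*(x-t)) * g (x-t)) * exp (l*x))"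
  proof
    fix t
    have "exp (-l*(x-t)) * exp (l*x) = exp (l*t)" by (simp add: mult_exp_exp algebra_simps)
    then show "exp (l*t) * g (x - t) = (exp (-l*(x-t)) * g (x-t)) * exp (l*x)"
      by (metis mult.assoc mult.commute)
  qed
  have "Tl l g x = integral {0..1} (\<lambda>t. exp (-l*(x-t)) * g (x-t)) * exp (l*x)"
    unfolding Tl_def e by (rule integral_mult_left)
  also have "\<dots> = integral {x-1..x} (\<lambda>u. exp (-l*u) * g u) * exp (l*x)"
    using sub_int[of "\<lambda>u. exp (-l*u) * g u" x] by simp
  finally show ?thesis by simp
qed

lemma T_lin:
  assumes "PCZ f" "PCZ g"
  shows "Tl l (\<lambda>u. a * f u + b * g u) x = a * Tl l f x + b * Tl l g x"
proof -
  have e: "(\<lambda>t. exp (l*t) * (a * f (x - t) + b * g (x - t))) =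
        (\<lambda>t. a * (exp (l*t) * f (x - t)) + b * (exp (l*t) * g (x - t)))"
    by (rule ext) (simp add: distrib_left)
  have i1: "(\<lambda>t. a * (exp (l*t) * f (x - t))) integrable_on {0..1}"
    by (rule integrable_on_mult_right[OF T_intble[OF assms(1)]])
  have i2: "(\<lambda>t. b * (exp (l*t) * g (x - t))) integrable_on {0..1}"
    by (rule integrable_on_mult_right[OF T_intble[OF assms(2)]])
  have "Tl l (\<lambda>u. a * f u + b * g u) x =
        integral {0..1} (\<lambda>t. a * (exp (l*t) * f (x - t)) + b * (exp (l*t) * g (x - t)))"
    unfolding Tl_def e ..
  also have "\<dots> = integral {0..1} (\<lambda>t. a * (exp (l*t) * f (x - t))) + integral {0..1} (\<lambda>t. b * (exp (l*t) * g (x - t)))"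
    by (rule integral_add[OF i1 i2])
  also have "\<dots> = a * Tl l f x + b * Tl l g x" unfolding Tl_def by simp
  finally show ?thesis .
qed

lemma finite_Ints_Icc: "finite {z\<in>{a..b::real}. z \<in> \<int>}"
proof -
  have "{z\<in>{a..b::real}. z \<in> \<int>} \<subseteq> of_int ` {floor a..ceiling b}"
  proof
    fix z assume z: "z \<in> {z\<in>{a..b::real}. z \<in> \<int>}"
    then obtain n where n: "z = of_int n" by (auto elim: Ints_cases)
    then have "n \<in> {floor a..ceiling b}" using z by (auto simp: floor_le_iff le_ceiling_iff)
    then show "z \<in> of_int ` {floor a..ceiling b}" using n by auto
  qed
  then show ?thesis by (rule finite_subset) auto
qed

lemma window_cont:
  assumes "PCZ F" shows "isCont (\<lambda>x. integral {x-1..x} F) x0"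
proof -
  define A where "A = x0 - 2"
  have int: "F integrable_on {A..x0+1}" using PCZ_LI[OF assms] unfolding LI_def by blast
  have c1: "continuous_on {A..x0+1} (\<lambda>x. integral {A..x} F)"
    by (rule indefinite_integral_continuous_1[OF int])
  have c1': "continuous_on {x0-1..x0+1} (\<lambda>x. integral {A..x} F)"
    by (rule continuous_on_subset[OF c1]) (auto simp: A_def)
  have c2': "continuous_on {x0-1..x0+1} (\<lambda>x. integral {A..x-1} F)"
  proof -
    have i1: "continuous_on {x0-1..x0+1} (\<lambda>x. x - 1)" by (intro continuous_intros)
    have i2: "(\<lambda>x. x - 1) ` {x0-1..x0+1} \<subseteq> {A..x0+1}" by (auto simp: A_def)
    have "continuous_on {x0-1..x0+1} ((\<lambda>x. integral {A..x} F) \<circ> (\<lambda>x. x - 1))"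
      by (rule continuous_on_compose[OF i1 continuous_on_subset[OF c1 i2]])
    then show ?thesis by (simp add: o_def)
  qed
  have eq: "integral {x-1..x} F = integral {A..x} F - integral {A..x-1} F" if "x \<in> {x0-1..x0+1}" for x
  proof -
    have "F integrable_on {A..x}" using PCZ_LI[OF assms] unfolding LI_def by blast
    then have "integral {A..x-1} F + integral {x-1..x} F = integral {A..x} F"
      by (rule Henstock_Kurzweil_Integration.integral_combine[rotated 2]) (use that in \<open>auto simp: A_def\<close>)
    then show ?thesis by simp
  qed
  have "continuous_on {x0-1..x0+1} (\<lambda>x. integral {A..x} F - integral {A..x-1} F)"
    using c1' c2' by (intro continuous_intros)
  then have "continuous_on {x0-1..x0+1} (\<lambda>x. integral {x-1..x} F)"
    by (rule continuous_on_eq) (use eq in auto)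
  then show ?thesis
    by (rule continuous_on_interior) auto
qed

lemma T_cont: assumes "PCZ g" shows "isCont (Tl l g) x"
proof -
  have "isCont (\<lambda>x. exp (l*x) * integral {x-1..x} (\<lambda>u. exp (-l*u) * g u)) x"
    by (rule continuous_mult[OF _ window_cont[OF exp_PCZ[OF assms]]]) (intro continuous_intros)
  then show ?thesis by (simp add: T_repr[abs_def])
qed

lemma T_cont_on: "PCZ g \<Longrightarrow> continuous_on UNIV (Tl l g)"
  by (simp add: T_cont continuous_at_imp_continuous_on)

lemma T_PCZ: "PCZ g \<Longrightarrow> PCZ (Tl l g)"
  by (rule PCZ_cont[OF T_cont_on])

lemma T_AP: assumes "AP g" shows "AP (Tl l g)"
  unfolding AP_def Tl_def
proof
  fix x
  have "\<And>t. g (x + 1 - t) = - g (x - t)" using assms unfolding AP_def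
    by (metis add.commute add_diff_eq)
  then show "integral {0..1} (\<lambda>t. exp (l * t) * g (x + 1 - t)) = - integral {0..1} (\<lambda>t. exp (l * t) * g (x - t))"
    by simp
qed

lemma AP_shift: "AP g \<Longrightarrow> g (x - 1) = - g x"
  unfolding AP_def by (metis diff_add_cancel minus_minus)

lemma AP_int:
  assumes "AP g" shows "g (x + of_int k) = (if even k then g x else - g x)"
proof (induct k rule: int_induct[where k=0])
  case base then show ?case by simp
next
  case (step1 i)
  have "g (x + of_int (i+1)) = - g (x + of_int i)"
    using assms unfolding AP_def by (metis add.assoc of_int_add of_int_1)
  then show ?case using step1 by auto
next
  case (step2 i)
  have "g (x + of_int i) = - g (x + of_int (i - 1))"
    using assms unfolding AP_def by (metis diff_add_cancel add.assoc of_int_add of_int_1)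
  then show ?case using step2 by (auto split: if_splits)
qed

lemma AP_eq01:
  assumes "AP f" "AP g" "\<forall>x\<in>{0..<1}. f x = g x" shows "f x = g x"
proof -
  define k where "k = floor x"
  define y where "y = x - of_int k"
  have y: "y \<in> {0..<1}" unfolding y_def k_def by auto linarith
  have x: "x = y + of_int k" unfolding y_def by simp
  show ?thesis unfolding x using AP_int[OF assms(1), of y k] AP_int[OF assms(2), of y k] assms(3) y
    by simp
qed

lemma AP_PCZ01:
  assumes "AP g" "continuous_on {0..1} h" "\<forall>x\<in>{0..<1}. g x = h x" shows "PCZ g"
  unfolding PCZ_def
proof
  fix k :: int
  define h' where "h' = (\<lambda>y. (if even k then 1 else -1) * h (y - of_int k))"
  have c0: "continuous_on {real_of_int k..real_of_int k+1} (\<lambda>y. y - of_int k)"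
    by (rule continuous_on_diff[OF continuous_on_id continuous_on_const])
  have c1: "(\<lambda>y. y - of_int k) ` {real_of_int k..real_of_int k+1} \<subseteq> {0..1}" by auto
  have "continuous_on {real_of_int k..real_of_int k+1} (h \<circ> (\<lambda>y. y - of_int k))"
    by (rule continuous_on_compose[OF c0 continuous_on_subset[OF assms(2) c1]])
  then have c2: "continuous_on {real_of_int k..real_of_int k+1} (\<lambda>y. h (y - of_int k))"
    by (simp add: o_def)
  have c: "continuous_on {real_of_int k..real_of_int k+1} h'"
    unfolding h'_def by (rule continuous_on_mult[OF continuous_on_const c2])
  have "g y = h' y" if "y \<in> {real_of_int k..<real_of_int k+1}" for y
  proof -
    have yy: "y - of_int k \<in> {0..<1}" using that by auto
    have "g y = g ((y - of_int k) + of_int k)" by simp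
    also have "\<dots> = (if even k then g (y - of_int k) else - g (y - of_int k))" by (rule AP_int[OF assms(1)])
    finally show ?thesis unfolding h'_def using assms(3) yy by auto
  qed
  then show "\<exists>h. continuous_on {real_of_int k..real_of_int k+1} h \<and>
      (\<forall>x\<in>{real_of_int k..<real_of_int k+1}. g x = h x)" using c by blast
qed

lemma INTR_eq: "INTR F h \<Longrightarrow> a \<le> y \<Longrightarrow> F y = F a + integral {a..y} h"
  unfolding INTR_def by (metis add.commute diff_add_cancel)

lemma INTR_cont:
  assumes "INTR F h" "LI h" shows "isCont F x0"
proof -
  define A where "A = x0 - 1"
  have "continuous_on {A..x0+1} (\<lambda>y. F A + integral {A..y} h)"
    using assms(2) unfolding LI_def by (intro continuous_on_add continuous_on_const indefinite_integral_continuous_1) auto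
  then have "continuous_on {A..x0+1} F"
    by (rule continuous_on_eq) (use INTR_eq[OF assms(1)] in auto)
  then show ?thesis by (rule continuous_on_interior) (auto simp: A_def)
qed

lemma INTR_deriv:
  assumes "INTR F h" "LI h" "isCont h x0" shows "(F has_real_derivative h x0) (at x0)"
proof -
  define A where "A = x0 - 1"
  have i: "h integrable_on {A..x0+1}" using assms(2) unfolding LI_def by blast
  have c: "continuous (at x0 within {A..x0+1} - {}) h"
    using assms(3) by (rule continuous_at_imp_continuous_at_within)
  have d0: "((\<lambda>u. integral {A..u} h) has_vector_derivative h x0) (at x0 within {A..x0+1} - {})"
    by (rule integral_has_vector_derivative_continuous_at[OF i _ _ c]) (auto simp: A_def)
  have d1: "((\<lambda>u. integral {A..u} h) has_real_derivative h x0) (at x0 within {A..x0+1})"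
    using d0 unfolding has_real_derivative_iff_has_vector_derivative by simp
  have d2: "at x0 within {A..x0+1} = at x0" by (rule at_within_Icc_at) (auto simp: A_def)
  have d3: "((\<lambda>u. integral {A..u} h) has_real_derivative h x0) (at x0)" using d1 d2 by simp
  have d: "((\<lambda>u. F A + integral {A..u} h) has_real_derivative h x0) (at x0)"
    using DERIV_add[OF DERIV_const d3] by simp
  have eqs: "F A + integral {A..u} h = F u" if "u \<in> {A<..<x0+1}" for u
    using INTR_eq[OF assms(1), of A u] that by simp
  show ?thesis
    by (rule has_field_derivative_transform_within_open[OF d open_greaterThanLessThan _ eqs]) (auto simp: A_def)
qed

lemma INTR_rderiv:
  assumes "INTR F h" "LI h" "continuous (at_right x0) h" shows "(F has_real_derivative h x0) (at_right x0)"
proof -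
  have i: "h integrable_on {x0..x0+1}" using assms(2) unfolding LI_def by blast
  have ee: "at x0 within {x0..x0+1} = at_right x0" by (rule at_within_Icc_at_right) simp
  have c: "continuous (at x0 within {x0..x0+1} - {}) h"
    using assms(3) ee by simp
  have "((\<lambda>u. integral {x0..u} h) has_vector_derivative h x0) (at x0 within {x0..x0+1} - {})"
    by (rule integral_has_vector_derivative_continuous_at[OF i _ _ c]) auto
  then have "((\<lambda>u. integral {x0..u} h) has_real_derivative h x0) (at x0 within {x0..x0+1})"
    by (simp add: has_real_derivative_iff_has_vector_derivative)
  then have "((\<lambda>u. F x0 + integral {x0..u} h) has_real_derivative 0 + h x0) (at x0 within {x0..x0+1})"
    by (intro DERIV_add DERIV_const)
  then have d: "((\<lambda>u. F x0 + integral {x0..u} h) has_real_derivative h x0) (at x0 within {x0..x0+1})" by simp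
  have "(F has_real_derivative h x0) (at x0 within {x0..x0+1})"
    by (rule has_field_derivative_transform_within[OF d, where d=1])
       (use INTR_eq[OF assms(1)] in auto)
  then show ?thesis using ee by simp
qed

lemma FTC_INTR:
  assumes "continuous_on UNIV F" "PCZ h" "\<And>x. x \<notin> \<int> \<Longrightarrow> (F has_real_derivative h x) (at x)"
  shows "INTR F h"
  unfolding INTR_def
proof (intro allI impI)
  fix x y :: real assume xy: "x \<le> y"
  have "(h has_integral F y - F x) {x..y}"
  proof (rule fundamental_theorem_of_calculus_interior_strong[OF finite_Ints_Icc[of x y] xy])
    show "continuous_on {x..y} F" using assms(1) by (rule continuous_on_subset) auto
    fix z assume "z \<in> {x<..<y} - {z \<in> {x..y}. z \<in> \<int>}"
    then have "z \<notin> \<int>" by auto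
    then show "(F has_vector_derivative h z) (at z)"
      using assms(3) by (simp add: has_real_derivative_iff_has_vector_derivative)
  qed
  then show "F y - F x = integral {x..y} h" by (simp add: integral_unique)
qed

lemma phi_INTR:
  assumes "AP g" "PCZ g"
  shows "INTR (\<lambda>x. exp (-l*x) * Tl l g x) (\<lambda>u. (1 + exp l) * (exp (-l*u) * g u))"
  unfolding INTR_def
proof (intro allI impI)
  fix x y :: real assume xy: "x \<le> y"
  define F where "F = (\<lambda>u. exp (-l*u) * g u)"
  have LF: "LI F" unfolding F_def by (rule PCZ_LI[OF exp_PCZ[OF assms(2)]])
  have rep: "exp (-l*z) * Tl l g z = integral {z-1..z} F" for z
    unfolding T_repr F_def by (simp add: mult_exp_exp)
  have c1: "integral {x-1..x} F + integral {x..y} F = integral {x-1..y} F"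
    by (rule Henstock_Kurzweil_Integration.integral_combine) (use xy LF[unfolded LI_def] in auto)
  have c2: "integral {x-1..y-1} F + integral {y-1..y} F = integral {x-1..y} F"
    by (rule Henstock_Kurzweil_Integration.integral_combine) (use xy LF[unfolded LI_def] in auto)
  have sh: "integral {x-1..y-1} F = integral {x..y} (F \<circ> (+) (-1))"
    using integral_shift_Icc_real[of x y F "-1"] by simp
  have fu: "\<And>u. (F \<circ> (+) (-1)) u = - exp l * F u"
  proof -
    fix u
    have "(F \<circ> (+) (-1)) u = exp (-l*(u-1)) * g (u - 1)" unfolding F_def by simp
    also have "\<dots> = exp (-l*(u-1)) * (- g u)" using AP_shift[OF assms(1)] by simp
    also have "exp (-l*(u-1)) = exp l * exp (-l*u)" by (simp add: mult_exp_exp algebra_simps)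
    finally show "(F \<circ> (+) (-1)) u = - exp l * F u" unfolding F_def by simp
  qed
  have fe: "F \<circ> (+) (-1) = (\<lambda>u. - exp l * F u)" by (rule ext) (rule fu)
  have "integral {x..y} (F \<circ> (+) (-1)) = - exp l * integral {x..y} F"
    unfolding fe by (rule integral_mult_right)
  then have "exp (-l*y) * Tl l g y - exp (-l*x) * Tl l g x = (1 + exp l) * integral {x..y} F"
    unfolding rep using c1 c2 sh by (simp add: algebra_simps)
  then show "exp (-l*y) * Tl l g y - exp (-l*x) * Tl l g x = integral {x..y} (\<lambda>u. (1 + exp l) * (exp (-l*u) * g u))"
    unfolding F_def by simp
qed

lemma T_deriv_gen:
  assumes "AP g" "PCZ g"
    and phid: "((\<lambda>x. exp (-l*x) * Tl l g x) has_real_derivative (1 + exp l) * (exp (-l*x) * g x)) (at x within S)"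
  shows "(Tl l g has_real_derivative l * Tl l g x + (1 + exp l) * g x) (at x within S)"
proof -
  have e: "((\<lambda>x. exp (l*x)) has_real_derivative exp (l*x) * l) (at x within S)"
    by (intro derivative_eq_intros) auto
  have "((\<lambda>x. exp (l*x) * (exp (-l*x) * Tl l g x)) has_real_derivative
         exp (l*x) * l * (exp (-l*x) * Tl l g x) + ((1 + exp l) * (exp (-l*x) * g x)) * exp (l*x)) (at x within S)"
    by (rule DERIV_mult[OF e phid])
  moreover have "(\<lambda>x. exp (l*x) * (exp (-l*x) * Tl l g x)) = Tl l g"
    by (rule ext) (simp add: mult.assoc[symmetric] mult_exp_exp)
  moreover have "exp (l*x) * l * (exp (-l*x) * Tl l g x) + ((1 + exp l) * (exp (-l*x) * g x)) * exp (l*x)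
      = l * Tl l g x + (1 + exp l) * g x"
  proof -
    have "exp (-l*x) = inverse (exp (l*x))" by (simp add: exp_minus[symmetric])
    then show ?thesis by (simp add: field_simps)
  qed
  ultimately show ?thesis by simp
qed

lemma T_deriv:
  assumes "AP g" "PCZ g" "isCont g x"
  shows "(Tl l g has_real_derivative l * Tl l g x + (1 + exp l) * g x) (at x)"
proof (rule T_deriv_gen[OF assms(1,2)])
  have "isCont (\<lambda>u. (1 + exp l) * (exp (-l*u) * g u)) x"
    by (intro continuous_mult[OF continuous_const] continuous_mult[OF _ assms(3)] isCont_exp') simp
  then show "((\<lambda>x. exp (-l*x) * Tl l g x) has_real_derivative (1 + exp l) * (exp (-l*x) * g x)) (at x)"
    by (rule INTR_deriv[OF phi_INTR[OF assms(1,2)] PCZ_LI[OF PCZ_cmult[OF exp_PCZ[OF assms(2)]]]])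
qed

lemma T_rderiv:
  assumes "AP g" "PCZ g"
  shows "(Tl l g has_real_derivative l * Tl l g x + (1 + exp l) * g x) (at_right x)"
proof (rule T_deriv_gen[OF assms(1,2)])
  have "continuous (at_right x) (\<lambda>u. (1 + exp l) * (exp (-l*u) * g u))"
    by (rule PCZ_rcont[OF PCZ_cmult[OF exp_PCZ[OF assms(2)]]])
  then show "((\<lambda>x. exp (-l*x) * Tl l g x) has_real_derivative (1 + exp l) * (exp (-l*x) * g x)) (at_right x)"
    by (rule INTR_rderiv[OF phi_INTR[OF assms(1,2)] PCZ_LI[OF PCZ_cmult[OF exp_PCZ[OF assms(2)]]]])
qed

lemma T_INTR:
  assumes "AP g" "PCZ g"
  shows "INTR (Tl l g) (\<lambda>x. l * Tl l g x + (1 + exp l) * g x)"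
proof (rule FTC_INTR[OF T_cont_on[OF assms(2)]])
  show "PCZ (\<lambda>x. l * Tl l g x + (1 + exp l) * g x)"
    by (intro PCZ_add PCZ_cmult T_PCZ assms(2))
  fix x :: real assume "x \<notin> \<int>"
  then show "(Tl l g has_real_derivative l * Tl l g x + (1 + exp l) * g x) (at x)"
    by (rule T_deriv[OF assms PCZ_isCont[OF assms(2)]])
qed

lemma T_IBP:
  assumes "AP g" "PCZ g" "continuous_on UNIV g" "PCZ k" "INTR g k"
  shows "Tl l k x = l * Tl l g x + (1 + exp l) * g x"
proof -
  define w where "w = (\<lambda>t. exp (l*t) * g (x - t))"
  define w' where "w' = (\<lambda>t. l * (exp (l*t) * g (x - t)) - exp (l*t) * k (x - t))"
  define S where "S = {t\<in>{0..1}. x - t \<in> \<int>}"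
  have finS: "finite S"
  proof -
    have "S \<subseteq> (\<lambda>z. x - z) ` {z\<in>{x-1..x}. z \<in> \<int>}"
    proof
      fix t assume "t \<in> S"
      then have "x - t \<in> {z\<in>{x-1..x}. z \<in> \<int>}" "t = x - (x - t)" unfolding S_def by auto
      then show "t \<in> (\<lambda>z. x - z) ` {z\<in>{x-1..x}. z \<in> \<int>}" by blast
    qed
    then show ?thesis by (rule finite_subset) (intro finite_imageI finite_Ints_Icc)
  qed
  have gc: "isCont g z" for z using assms(3) by (simp add: continuous_on_eq_continuous_at)
  have wc: "continuous_on {0..1} w"
  proof (rule continuous_at_imp_continuous_on, intro ballI)
    fix t :: real
    have "isCont (\<lambda>t. g (x - t)) t" by (rule isCont_o2[OF _ gc]) (intro continuous_intros)
    then show "isCont w t" unfolding w_def by (intro continuous_mult[OF isCont_exp']) simp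
  qed
  have wd: "(w has_vector_derivative w' t) (at t)" if t: "t \<in> {0<..<1} - S" for t
  proof -
    have "x - t \<notin> \<int>" using t unfolding S_def by auto
    then have "isCont k (x - t)" by (rule PCZ_isCont[OF assms(4)])
    then have gd: "(g has_real_derivative k (x - t)) (at (x - t))"
      by (rule INTR_deriv[OF assms(5) PCZ_LI[OF assms(4)]])
    have "((\<lambda>t. g (x - t)) has_real_derivative k (x - t) * (-1)) (at t)"
      by (rule DERIV_chain2[where f=g and g="\<lambda>t. x - t", OF gd]) (intro derivative_eq_intros, auto)
    then have "(w has_real_derivative exp (l*t) * l * g (x - t) + exp (l*t) * (k (x - t) * (-1))) (at t)"
      unfolding w_def by (intro derivative_eq_intros) auto
    then show ?thesis unfolding w'_def has_real_derivative_iff_has_vector_derivative[symmetric]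
      by (simp add: algebra_simps)
  qed
  have "(w' has_integral w 1 - w 0) {0..1}"
    by (rule fundamental_theorem_of_calculus_interior_strong[OF finS _ wd wc]) auto
  then have I: "integral {0..1} w' = w 1 - w 0" by (rule integral_unique)
  have "integral {0..1} w' = l * Tl l g x - Tl l k x"
    unfolding w'_def Tl_def
    by (subst integral_diff) (auto intro!: integrable_on_mult_right T_intble assms)
  moreover have "w 1 - w 0 = - (1 + exp l) * g x"
    unfolding w_def using AP_shift[OF assms(1), of x] by (simp add: algebra_simps)
  ultimately show ?thesis using I by (simp add: algebra_simps)
qed

lemma T_pos:
  assumes "AP h" "PCZ h" "\<forall>x\<in>{a..<a+1}. h x \<ge> 0"
  shows "\<exists>b. \<forall>x\<in>{b..<b+1}. Tl l h x \<ge> 0"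
proof -
  define \<phi> where "\<phi> = (\<lambda>x. exp (-l*x) * Tl l h x)"
  have IN: "INTR \<phi> (\<lambda>u. (1 + exp l) * (exp (-l*u) * h u))" unfolding \<phi>_def by (rule phi_INTR[OF assms(1,2)])
  have LH: "LI (\<lambda>u. (1 + exp l) * (exp (-l*u) * h u))"
    by (rule PCZ_LI[OF PCZ_cmult[OF exp_PCZ[OF assms(2)]]])
  have mono: "\<phi> x \<le> \<phi> y" if "a \<le> x" "x \<le> y" "y < a + 1" for x y
  proof -
    have "\<phi> y - \<phi> x = integral {x..y} (\<lambda>u. (1 + exp l) * (exp (-l*u) * h u))"
      using IN that unfolding INTR_def by blast
    also have "\<dots> \<ge> 0"
    proof (rule integral_nonneg)
      show "(\<lambda>u. (1 + exp l) * (exp (-l*u) * h u)) integrable_on {x..y}" using LH unfolding LI_def by blast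
      fix u assume "u \<in> {x..y}"
      then have "h u \<ge> 0" using assms(3) that by auto
      then show "0 \<le> (1 + exp l) * (exp (-l*u) * h u)" by (simp add: add_pos_pos less_imp_le)
    qed
    finally show ?thesis by simp
  qed
  have per: "\<phi> (x + 1) = - exp (-l) * \<phi> x" for x
  proof -
    have "Tl l h (x + 1) = - Tl l h x" using T_AP[OF assms(1)] unfolding AP_def by blast
    moreover have "exp (-l*(x+1)) = exp (-l) * exp (-l*x)" by (simp add: mult_exp_exp algebra_simps)
    ultimately show ?thesis unfolding \<phi>_def by simp
  qed
  have sgn: "Tl l h x \<ge> 0" if "\<phi> x \<ge> 0" for x
  proof -
    have "Tl l h x = exp (l*x) * \<phi> x" unfolding \<phi>_def by (simp add: mult.assoc[symmetric] mult_exp_exp)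
    then show ?thesis using that by simp
  qed
  have cont: "continuous_on {a..a+1} \<phi>"
    by (rule continuous_at_imp_continuous_on) (use INTR_cont[OF IN LH] in blast)
  show ?thesis
  proof (cases "\<phi> a \<ge> 0")
    case True
    have "\<forall>x\<in>{a..<a+1}. Tl l h x \<ge> 0"
    proof
      fix x assume "x \<in> {a..<a+1}"
      then have "\<phi> x \<ge> \<phi> a" using mono[of a x] by auto
      then show "Tl l h x \<ge> 0" using True sgn by auto
    qed
    then show ?thesis by blast
  next
    case False
    have "exp (-l) * \<phi> a < 0" using False by (intro mult_pos_neg) auto
    then have "\<phi> (a+1) > 0" using per[of a] by simp
    then obtain b where b: "a \<le> b" "b \<le> a + 1" "\<phi> b = 0"
      using IVT'[of \<phi> a 0 "a+1", OF _ _ _ cont] False by auto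
    have ba: "b < a + 1" using b \<open>\<phi> (a+1) > 0\<close> by (cases "b = a + 1") auto
    have "\<forall>x\<in>{b..<b+1}. Tl l h x \<ge> 0"
    proof
      fix x assume x: "x \<in> {b..<b+1}"
      show "Tl l h x \<ge> 0"
      proof (cases "x < a + 1")
        case True
        then have "\<phi> x \<ge> \<phi> b" using mono[of b x] x b by auto
        then show ?thesis using b sgn by auto
      next
        case False
        then have "\<phi> (x - 1) \<le> \<phi> b" using mono[of "x-1" b] x b ba by auto
        then have "exp (-l) * \<phi> (x - 1) \<le> 0" using b by (intro mult_nonneg_nonpos) auto
        then have "\<phi> x \<ge> 0" using per[of "x-1"] by simp
        then show ?thesis using sgn by auto
      qed
    qed
    then show ?thesis by blast
  qed
qed

lemma SC_mono:
  assumes "AP h" "continuous_on {0..1} k" "mono_on {0..1} k"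
    "\<forall>x\<in>{0..<1}. \<exists>w>0. h x = w * k x"
  shows "\<exists>y0. \<forall>x\<in>{y0..<y0+1}. h x \<ge> 0"
proof -
  have pos: "h x \<ge> 0" if "x \<in> {0..<1}" "k x \<ge> 0" for x
    using assms(4) that by (metis mult_nonneg_nonneg less_imp_le)
  have neg: "h x \<le> 0" if "x \<in> {0..<1}" "k x \<le> 0" for x
    using assms(4) that by (metis mult_pos_neg less_imp_le mult_nonneg_nonpos)
  have shift: "h x \<ge> 0" if "h (x - 1) \<le> 0" for x
    using AP_shift[OF assms(1), of x] that by simp
  show ?thesis
  proof (cases "k 0 \<ge> 0")
    case True
    have "\<forall>x\<in>{0..<1}. h x \<ge> 0"
    proof
      fix x :: real assume x: "x \<in> {0..<1}"
      then have "k x \<ge> k 0" using mono_onD[OF assms(3), of 0 x] by auto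
      then show "h x \<ge> 0" using pos[OF x] True by auto
    qed
    then show ?thesis by (intro exI[of _ 0]) simp
  next
    case False
    show ?thesis
    proof (cases "k 1 \<le> 0")
      case True
      have "\<forall>x\<in>{1..<1+1}. h x \<ge> 0"
      proof
        fix x :: real assume x: "x \<in> {1..<1+1}"
        then have x1: "x - 1 \<in> {0..<1}" by auto
        then have "k (x - 1) \<le> k 1" using mono_onD[OF assms(3), of "x-1" 1] by auto
        then have "h (x - 1) \<le> 0" using neg[OF x1] True by auto
        then show "h x \<ge> 0" by (rule shift)
      qed
      then show ?thesis by blast
    next
      case False2: False
      obtain r where r: "0 \<le> r" "r \<le> 1" "k r = 0"
        using IVT'[of k 0 0 1, OF _ _ _ assms(2)] False False2 by auto
      have r1: "r < 1" using r False2 by (metis order_le_less)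
      have "\<forall>x\<in>{r..<r+1}. h x \<ge> 0"
      proof
        fix x :: real assume x: "x \<in> {r..<r+1}"
        show "h x \<ge> 0"
        proof (cases "x < 1")
          case True
          then have x0: "x \<in> {0..<1}" using x r by auto
          have "k x \<ge> k r" using mono_onD[OF assms(3), of r x] x r True by auto
          then show ?thesis using pos[OF x0] r by auto
        next
          case False
          then have x1: "x - 1 \<in> {0..<1}" using x r1 by auto
          have "k (x - 1) \<le> k r" using mono_onD[OF assms(3), of "x-1" r] x r False by auto
          then have "h (x - 1) \<le> 0" using neg[OF x1] r by auto
          then show ?thesis by (rule shift)
        qed
      qed
      then show ?thesis by blast
    qed
  qed
qed

lemma SC:
  assumes "AP h" "continuous_on {0..1} k" "mono_on {0..1} k \<or> antimono_on {0..1} k"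
    "\<forall>x\<in>{0..<1}. \<exists>w>0. h x = w * k x"
  shows "\<exists>y0. \<forall>x\<in>{y0..<y0+1}. h x \<ge> 0"
  using assms(3)
proof
  assume "mono_on {0..1} k" then show ?thesis using SC_mono assms by blast
next
  assume am: "antimono_on {0..1} k"
  have "AP (\<lambda>x. - h x)" using assms(1) unfolding AP_def by simp
  moreover have "continuous_on {0..1} (\<lambda>x. - k x)" using assms(2) by (intro continuous_intros)
  moreover have "mono_on {0..1} (\<lambda>x. - k x)" using am by (auto intro!: mono_onI dest: monotone_onD)
  moreover have "\<forall>x\<in>{0..<1}. \<exists>w>0. - h x = w * (- k x)" using assms(4) by auto
  ultimately obtain y0 where y0: "\<forall>x\<in>{y0..<y0+1}. - h x \<ge> 0" using SC_mono by blast
  have "\<forall>x\<in>{y0+1..<y0+1+1}. h x \<ge> 0"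
  proof
    fix x assume "x \<in> {y0+1..<y0+1+1}"
    then have "- h (x - 1) \<ge> 0" using y0 by auto
    then show "h x \<ge> 0" using AP_shift[OF assms(1), of x] by simp
  qed
  then show ?thesis by blast
qed

lemma echi_PCZ: "PCZ (echi l)"
  unfolding PCZ_def
proof
  fix k :: int
  show "\<exists>h. continuous_on {real_of_int k..real_of_int k+1} h \<and>
      (\<forall>x\<in>{real_of_int k..<real_of_int k+1}. echi l x = h x)"
  proof (cases "k = 0")
    case True
    have "continuous_on {real_of_int k..real_of_int k+1} (\<lambda>x. exp (l*x))" by (intro continuous_intros)
    moreover have "\<forall>x\<in>{real_of_int k..<real_of_int k+1}. echi l x = exp (l*x)"
      using True unfolding echi_def by auto
    ultimately show ?thesis by blast
  next
    case False
    have "\<forall>x\<in>{real_of_int k..<real_of_int k+1}. echi l x = 0"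
    proof
      fix x assume x: "x \<in> {real_of_int k..<real_of_int k+1}"
      have "k \<ge> 1 \<or> k \<le> -1" using False by auto
      then have "x \<ge> 1 \<or> x < 0"
      proof
        assume "k \<ge> 1" then have "real_of_int k \<ge> 1" by simp
        then show ?thesis using x by auto
      next
        assume "k \<le> -1" then have "real_of_int k \<le> -1" by simp
        then show ?thesis using x by auto
      qed
      then show "echi l x = 0" unfolding echi_def by auto
    qed
    then show ?thesis by (intro exI[of _ "\<lambda>_. 0"]) auto
  qed
qed

lemma conv_T: "conv (echi l) B y = Tl l B y"
proof -
  have "(\<lambda>t. echi l t * B (y - t)) = (\<lambda>t. if t \<in> {0..<1} then exp (l*t) * B (y - t) else 0)"
    unfolding echi_def by (rule ext) simp
  then have "conv (echi l) B y = integral {0..<1} (\<lambda>t. exp (l*t) * B (y - t))"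
    unfolding conv_def by (simp only: Henstock_Kurzweil_Integration.integral_restrict_UNIV)
  also have "\<dots> = integral {0..1} (\<lambda>t. exp (l*t) * B (y - t))"
  proof (rule integral_spike_set)
    show "negligible {x \<in> {0..<1} - {0..1}. exp (l * x) * B (y - x) \<noteq> 0}"
      by (rule negligible_subset[OF negligible_empty]) auto
    have "{x \<in> {0..1} - {0..<1}. exp (l * x) * B (y - x) \<noteq> (0::real)} \<subseteq> {1}" by auto
    then show "negligible {x \<in> {0..1} - {0..<1}. exp (l * x) * B (y - x) \<noteq> 0}"
      by (rule negligible_subset[rotated]) simp
  qed
  finally show ?thesis unfolding Tl_def .
qed

lemma expB_cons: "L \<noteq> [] \<Longrightarrow> expB (l # L) = conv (echi l) (expB L)"
  by (cases L) auto

lemma expB_supp: "expB L y \<noteq> 0 \<Longrightarrow> 0 \<le> y \<and> y < real (length L)"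
proof (induction L arbitrary: y rule: expB.induct)
  case 1 then show ?case by simp
next
  case (2 l) then show ?case by (auto simp: echi_def split: if_splits)
next
  case (3 l l' ls)
  show ?case
  proof (rule ccontr)
    assume nb: "\<not> (0 \<le> y \<and> y < real (length (l # l' # ls)))"
    have "(\<lambda>t. echi l t * expB (l' # ls) (y - t)) = (\<lambda>t. 0)"
    proof
      fix t
      show "echi l t * expB (l' # ls) (y - t) = 0"
      proof (cases "0 \<le> t \<and> t < 1")
        case True
        then have "\<not> (0 \<le> y - t \<and> y - t < real (length (l' # ls)))" using nb by auto
        then have "expB (l' # ls) (y - t) = 0" using "3.IH" by blast
        then show ?thesis by simp
      next
        case False then show ?thesis by (auto simp: echi_def)
      qed
    qed
    then have "expB (l # l' # ls) y = 0" by (simp add: conv_def)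
    then show False using "3.prems" by simp
  qed
qed

lemma expB_PCZ: "L \<noteq> [] \<Longrightarrow> PCZ (expB L)"
proof (induction L rule: expB.induct)
  case 1 then show ?case by simp
next
  case (2 l) then show ?case by (simp add: echi_PCZ)
next
  case (3 l l' ls)
  have "expB (l # l' # ls) = Tl l (expB (l' # ls))" by (rule ext) (simp add: conv_T)
  then show ?case using T_PCZ[OF "3.IH"] by simp
qed

lemma zak_fin:
  assumes "\<And>k. k \<notin> K \<Longrightarrow> f (x + of_int k) = 0" "finite K"
  shows "zak_half f x = (\<Sum>k\<in>K. (-1) powi k * f (x + of_int k))"
proof -
  have "zak_half f x = infsum (\<lambda>k. (-1) powi k * f (x + of_int k)) K"
    unfolding zak_half_def by (rule infsum_cong_neutral) (use assms(1) in auto)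
  then show ?thesis using assms(2) by simp
qed

lemma zak_AP: "AP (zak_half f)"
  unfolding AP_def
proof
  fix x
  define g where "g = (\<lambda>j::int. (-1::real) powi (j - 1) * f (x + of_int j))"
  have inj: "inj_on (\<lambda>k::int. k + 1) UNIV" by (auto intro: inj_onI)
  have im: "(\<lambda>k::int. k + 1) ` UNIV = UNIV" by (metis surj_def add_diff_cancel diff_add_cancel)
  have "zak_half f (x + 1) = infsum (g \<circ> (\<lambda>k. k + 1)) UNIV"
    unfolding zak_half_def g_def o_def by (simp add: add_ac)
  also have "\<dots> = infsum g ((\<lambda>k::int. k + 1) ` UNIV)" by (rule infsum_reindex[OF inj, symmetric])
  also have "\<dots> = infsum g UNIV" using im by simp
  also have "\<dots> = infsum (\<lambda>j. - ((-1) powi j * f (x + of_int j))) UNIV"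
  proof -
    have "\<And>j::int. (-1::real) powi (j - 1) = - ((-1) powi j)"
      by (subst power_int_diff) auto
    then show ?thesis unfolding g_def by simp
  qed
  also have "\<dots> = - zak_half f x" unfolding zak_half_def by (rule infsum_uminus)
  finally show "zak_half f (x + 1) = - zak_half f x" .
qed

definition ZZ :: "real list \<Rightarrow> real \<Rightarrow> real" where "ZZ L = zak_half (expB L)"

lemma ZZ_AP: "AP (ZZ L)" unfolding ZZ_def by (rule zak_AP)

lemma ZZ_cons:
  assumes "L \<noteq> []" shows "ZZ (l # L) x = Tl l (ZZ L) x"
proof -
  define B where "B = expB L"
  define n where "n = real (length L)"
  define K where "K = {floor (-x) - 1 .. ceiling (n - x) + 1}"
  have PB: "PCZ B" unfolding B_def by (rule expB_PCZ[OF assms])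
  have fK: "finite K" unfolding K_def by simp
  have Kout: "(of_int k < - x) \<or> (of_int k > n - x + 1)" if "k \<notin> K" for k
  proof -
    have "k < floor (-x) - 1 \<or> k > ceiling (n - x) + 1" using that unfolding K_def by auto
    then show ?thesis
    proof
      assume "k < floor (-x) - 1" then have "of_int k < -x" by linarith
      then show ?thesis by simp
    next
      assume "k > ceiling (n - x) + 1" then have "of_int k > n - x + 1" by linarith
      then show ?thesis by simp
    qed
  qed
  have e1: "expB (l # L) = Tl l B" unfolding B_def expB_cons[OF assms] by (rule ext) (rule conv_T)
  have "ZZ (l # L) x = (\<Sum>k\<in>K. (-1) powi k * Tl l B (x + of_int k))"
    unfolding ZZ_def
  proof (subst zak_fin[OF _ fK])
    fix k assume "k \<notin> K"
    then have "\<not> (0 \<le> x + of_int k \<and> x + of_int k < real (length (l # L)))"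
      using Kout[of k] unfolding n_def by auto
    then show "expB (l # L) (x + of_int k) = 0" using expB_supp by blast
  qed (simp add: e1)
  also have "\<dots> = (\<Sum>k\<in>K. integral {0..1} (\<lambda>t. (-1) powi k * (exp (l*t) * B (x + of_int k - t))))"
    unfolding Tl_def by simp
  also have "\<dots> = integral {0..1} (\<lambda>t. \<Sum>k\<in>K. (-1) powi k * (exp (l*t) * B (x + of_int k - t)))"
    by (rule integral_sum[symmetric, OF fK]) (intro integrable_on_mult_right T_intble PB)
  also have "\<dots> = integral {0..1} (\<lambda>t. exp (l*t) * ZZ L (x - t))"
  proof (rule integral_cong)
    fix t :: real assume t: "t \<in> {0..1}"
    have "ZZ L (x - t) = (\<Sum>k\<in>K. (-1) powi k * B (x - t + of_int k))"
      unfolding ZZ_def B_def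
    proof (rule zak_fin[OF _ fK])
      fix k assume "k \<notin> K"
      then have "\<not> (0 \<le> x - t + of_int k \<and> x - t + of_int k < real (length L))"
        using Kout[of k] t unfolding n_def by auto
      then show "expB L (x - t + of_int k) = 0" using expB_supp by blast
    qed
    then show "(\<Sum>k\<in>K. (-1) powi k * (exp (l*t) * B (x + of_int k - t))) = exp (l*t) * ZZ L (x - t)"
      by (simp add: sum_distrib_left algebra_simps)
  qed
  finally show ?thesis unfolding Tl_def .
qed

lemma ZZ_single: "x \<in> {0..<1} \<Longrightarrow> ZZ [l] x = exp (l*x)"
proof -
  assume x: "x \<in> {0..<1}"
  have "ZZ [l] x = (\<Sum>k\<in>{0}. (-1) powi k * echi l (x + of_int k))"
    unfolding ZZ_def
  proof (subst zak_fin[OF _ finite.insertI[OF finite.emptyI]])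
    fix k :: int assume k: "k \<notin> {0}"
    then have "k \<ge> 1 \<or> k \<le> -1" by auto
    then have "x + of_int k \<ge> 1 \<or> x + of_int k < 0"
    proof
      assume "k \<ge> 1" then have "real_of_int k \<ge> 1" by simp
      then show ?thesis using x by auto
    next
      assume "k \<le> -1" then have "real_of_int k \<le> -1" by simp
      then show ?thesis using x by auto
    qed
    then show "expB [l] (x + of_int k) = 0" by (auto simp: echi_def)
  qed simp
  then show ?thesis using x unfolding echi_def by simp
qed

lemma ZZ_PCZ: "L \<noteq> [] \<Longrightarrow> PCZ (ZZ L)"
proof (induction L)
  case Nil then show ?case by simp
next
  case (Cons l L)
  show ?case
  proof (cases "L = []")
    case True
    have "continuous_on {0..1} (\<lambda>x. exp (l*x))" by (intro continuous_intros)
    then show ?thesis using True by (intro AP_PCZ01[OF ZZ_AP]) (auto simp: ZZ_single)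
  next
    case False
    have "ZZ (l # L) = Tl l (ZZ L)" by (rule ext) (rule ZZ_cons[OF False])
    then show ?thesis using T_PCZ[OF Cons.IH[OF False]] by simp
  qed
qed

lemma ZZ_cont: "L \<noteq> [] \<Longrightarrow> continuous_on UNIV (ZZ (l # L))"
proof -
  assume L: "L \<noteq> []"
  have "ZZ (l # L) = Tl l (ZZ L)" by (rule ext) (rule ZZ_cons[OF L])
  then show ?thesis using T_cont_on[OF ZZ_PCZ[OF L]] by simp
qed

lemma AP_lin: "AP f \<Longrightarrow> AP g \<Longrightarrow> AP (\<lambda>x. a * f x + b * g x)"
  unfolding AP_def by (simp add: algebra_simps)

lemma INTR_cong: "INTR F h \<Longrightarrow> (\<And>x. h x = h' x) \<Longrightarrow> INTR F h'"
proof -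
  assume "INTR F h" "\<And>x. h x = h' x"
  moreover have "h = h'" using \<open>\<And>x. h x = h' x\<close> by (rule ext)
  ultimately show ?thesis by simp
qed

lemma ZZ_fun: "L \<noteq> [] \<Longrightarrow> ZZ (l # L) = Tl l (ZZ L)"
  by (rule ext) (rule ZZ_cons)

lemma ZZ_INTR_head:
  assumes "L \<noteq> []"
  shows "INTR (ZZ (l # L)) (\<lambda>x. l * ZZ (l # L) x + (1 + exp l) * ZZ L x)"
  using T_INTR[OF ZZ_AP ZZ_PCZ[OF assms], of l] unfolding ZZ_fun[OF assms] .

definition EE :: "real \<Rightarrow> real \<Rightarrow> real" where "EE c u = integral {0..u} (\<lambda>t. exp (c*t))"

lemma EE_int: "(\<lambda>t. exp ((c::real)*t)) integrable_on {p..q::real}"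
  by (rule integrable_continuous_interval) (intro continuous_intros)

lemma EE_diff: "0 \<le> u \<Longrightarrow> u \<le> v \<Longrightarrow> EE c v - EE c u = integral {u..v} (\<lambda>t. exp (c*t))"
  unfolding EE_def using Henstock_Kurzweil_Integration.integral_combine[of 0 u v "\<lambda>t. exp (c*t)", OF _ _ EE_int]
  by simp

lemma EE_mono: "mono_on {0..1} (EE c)"
proof (rule mono_onI)
  fix r s :: real assume "r \<in> {0..1}" "s \<in> {0..1}" "r \<le> s"
  then have "EE c s - EE c r = integral {r..s} (\<lambda>t. exp (c*t))" by (intro EE_diff) auto
  moreover have "integral {r..s} (\<lambda>t. exp (c*t)) \<ge> 0" by (rule integral_nonneg[OF EE_int]) simp
  ultimately show "EE c r \<le> EE c s" by simp
qed

lemma EE_cont: "continuous_on {0..1} (EE c)"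
  unfolding EE_def by (rule indefinite_integral_continuous_1[OF EE_int])

lemma EE_closed:
  assumes "c \<noteq> 0" "0 \<le> u" shows "EE c u = (exp (c*u) - 1) / c"
proof -
  have "((\<lambda>t. exp (c*t)) has_integral ((\<lambda>t. exp (c*t) / c) u - (\<lambda>t. exp (c*t) / c) 0)) {0..u}"
  proof (rule fundamental_theorem_of_calculus[OF assms(2)])
    fix x :: real assume "x \<in> {0..u}"
    have "((\<lambda>t. exp (c*t) / c) has_real_derivative (exp (c*x) * c) / c) (at x within {0..u})"
      using assms(1) by (intro derivative_eq_intros) auto
    then show "((\<lambda>t. exp (c*t) / c) has_vector_derivative exp (c*x)) (at x within {0..u})"
      using assms(1) by (simp add: has_real_derivative_iff_has_vector_derivative[symmetric])
  qed
  then show ?thesis unfolding EE_def using assms(1) by (simp add: integral_unique diff_divide_distrib)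
qed

lemma ZZ_two:
  assumes x: "x \<in> {0..<1}"
  shows "ZZ [a, b] x = exp (b*x) * ((1 + exp b) * EE (a - b) x - exp b * EE (a - b) 1)"
proof -
  have P: "PCZ (ZZ [b])" by (rule ZZ_PCZ) simp
  have i: "(\<lambda>t. exp (a*t) * ZZ [b] (x - t)) integrable_on {0..1}" by (rule T_intble[OF P])
  have "ZZ [a, b] x = integral {0..1} (\<lambda>t. exp (a*t) * ZZ [b] (x - t))"
    using ZZ_cons[of "[b]" a x] by (simp add: Tl_def)
  also have "\<dots> = integral {0..x} (\<lambda>t. exp (a*t) * ZZ [b] (x - t)) + integral {x..1} (\<lambda>t. exp (a*t) * ZZ [b] (x - t))"
    using Henstock_Kurzweil_Integration.integral_combine[of 0 x 1, OF _ _ i] x by simp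
  also have "integral {0..x} (\<lambda>t. exp (a*t) * ZZ [b] (x - t)) = integral {0..x} (\<lambda>t. exp (b*x) * exp ((a-b)*t))"
  proof (rule integral_cong)
    fix t assume t: "t \<in> {0..x}"
    then have "x - t \<in> {0..<1}" using x by auto
    then have "ZZ [b] (x - t) = exp (b*(x-t))" by (rule ZZ_single)
    moreover have "exp (a*t) * exp (b*(x-t)) = exp (b*x) * exp ((a-b)*t)"
      by (simp add: mult_exp_exp algebra_simps)
    ultimately show "exp (a*t) * ZZ [b] (x - t) = exp (b*x) * exp ((a-b)*t)" by simp
  qed
  also have "\<dots> = exp (b*x) * EE (a - b) x" unfolding EE_def by simp
  also have "integral {x..1} (\<lambda>t. exp (a*t) * ZZ [b] (x - t)) = integral {x..1} (\<lambda>t. - (exp (b*x) * exp b) * exp ((a-b)*t))"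
  proof (rule integral_spike[of "{x}"])
    show "negligible {x}" by simp
    fix t assume t: "t \<in> {x..1} - {x}"
    then have t1: "x - t + 1 \<in> {0..<1}" using x by auto
    have "ZZ [b] (x - t) = - ZZ [b] (x - t + 1)" using ZZ_AP[of "[b]"] unfolding AP_def by simp
    also have "\<dots> = - exp (b*(x - t + 1))" using ZZ_single[OF t1] by simp
    finally have "ZZ [b] (x - t) = - exp (b*(x - t + 1))" .
    moreover have "exp (a*t) * exp (b*(x - t + 1)) = (exp (b*x) * exp b) * exp ((a-b)*t)"
      by (simp add: mult_exp_exp algebra_simps)
    ultimately show "- (exp (b*x) * exp b) * exp ((a-b)*t) = exp (a*t) * ZZ [b] (x - t)" by simp
  qed
  also have "\<dots> = - (exp (b*x) * exp b) * (EE (a - b) 1 - EE (a - b) x)"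
    using EE_diff[of x 1 "a - b"] x by simp
  finally show ?thesis by (simp add: algebra_simps)
qed

lemma ZZ_two_ident:
  assumes "a \<noteq> b"
  shows "(a - b) * ZZ [a, b] x = (1 + exp b) * ZZ [a] x - (1 + exp a) * ZZ [b] x"
proof -
  have ap1: "AP (\<lambda>x. (a - b) * ZZ [a, b] x)" using AP_lin[OF ZZ_AP ZZ_AP, of "a-b" "[a,b]" 0 "[a,b]"] by simp
  have ap2: "AP (\<lambda>x. (1 + exp b) * ZZ [a] x - (1 + exp a) * ZZ [b] x)"
    using ZZ_AP[of "[a]"] ZZ_AP[of "[b]"] unfolding AP_def by (simp add: algebra_simps)
  have "(a - b) * ZZ [a, b] x = (1 + exp b) * ZZ [a] x - (1 + exp a) * ZZ [b] x" if x: "x \<in> {0..<1}" for x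
  proof -
    define c where "c = a - b"
    have c0: "c \<noteq> 0" using assms unfolding c_def by simp
    define P where "P = exp (b*x)"
    define Q where "Q = exp (c*x)"
    define R where "R = exp b"
    define S where "S = exp c"
    have ax: "exp (a*x) = P * Q" unfolding P_def Q_def c_def by (simp add: mult_exp_exp algebra_simps)
    have ea: "exp a = R * S" unfolding R_def S_def c_def by (simp add: mult_exp_exp)
    have E1: "EE c x = (Q - 1) / c" unfolding Q_def using EE_closed[OF c0, of x] x by simp
    have E2: "EE c 1 = (S - 1) / c" unfolding S_def using EE_closed[OF c0, of 1] by simp
    have "(a - b) * ZZ [a, b] x = c * (P * ((1 + R) * ((Q - 1) / c) - R * ((S - 1) / c)))"
      using ZZ_two[OF x, of a b] E1 E2 unfolding c_def P_def R_def by simp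
    also have "\<dots> = P * ((1 + R) * (Q - 1) - R * (S - 1))" using c0 by (simp add: field_simps)
    also have "\<dots> = (1 + R) * (P * Q) - (1 + R * S) * P" by (simp add: algebra_simps)
    also have "\<dots> = (1 + exp b) * ZZ [a] x - (1 + exp a) * ZZ [b] x"
      using ZZ_single[OF x, of a] ZZ_single[OF x, of b] ax ea unfolding P_def R_def by simp
    finally show ?thesis .
  qed
  then show ?thesis using AP_eq01[OF ap1 ap2] by blast
qed

lemma INT_gen:
  "L \<noteq> [] \<Longrightarrow> \<eta> \<in> set (l # L) \<Longrightarrow>
   INTR (ZZ (l # L)) (\<lambda>x. \<eta> * ZZ (l # L) x + (1 + exp \<eta>) * ZZ (remove1 \<eta> (l # L)) x)"
proof (induction L arbitrary: l)
  case Nil then show ?case by simp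
next
  case (Cons l1 L2)
  show ?case
  proof (cases "\<eta> = l")
    case True
    then show ?thesis using ZZ_INTR_head[of "l1 # L2" l] by simp
  next
    case False
    then have eta: "\<eta> \<in> set (l1 # L2)" using Cons.prems by simp
    have rem: "remove1 \<eta> (l # l1 # L2) = l # remove1 \<eta> (l1 # L2)" using False by simp
    show ?thesis
    proof (cases "L2 = []")
      case True
      then have e1: "\<eta> = l1" using eta by simp
      have "INTR (ZZ [l, l1]) (\<lambda>x. l * ZZ [l, l1] x + (1 + exp l) * ZZ [l1] x)"
        using ZZ_INTR_head[of "[l1]" l] by simp
      moreover have "l * ZZ [l, l1] x + (1 + exp l) * ZZ [l1] x = l1 * ZZ [l, l1] x + (1 + exp l1) * ZZ [l] x" for x
        using ZZ_two_ident[of l l1 x] False e1 by (simp add: algebra_simps)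
      ultimately have "INTR (ZZ [l, l1]) (\<lambda>x. l1 * ZZ [l, l1] x + (1 + exp l1) * ZZ [l] x)"
        by (rule INTR_cong)
      then show ?thesis using True e1 False by simp
    next
      case False2: False
      define R where "R = remove1 \<eta> (l1 # L2)"
      have Rne: "R \<noteq> []" unfolding R_def using False2 by (cases L2) auto
      define kk where "kk = (\<lambda>x. \<eta> * ZZ (l1 # L2) x + (1 + exp \<eta>) * ZZ R x)"
      have IH: "INTR (ZZ (l1 # L2)) kk" unfolding kk_def R_def by (rule Cons.IH[OF False2 eta])
      have Pk: "PCZ kk" unfolding kk_def
        by (intro PCZ_add PCZ_cmult ZZ_PCZ Rne) simp
      have PZ: "PCZ (ZZ (l1 # L2))" by (rule ZZ_PCZ) simp
      have ibp: "Tl l kk x = l * Tl l (ZZ (l1 # L2)) x + (1 + exp l) * ZZ (l1 # L2) x" for x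
        by (rule T_IBP[OF ZZ_AP ZZ_PCZ ZZ_cont[OF False2] Pk IH]) simp
      have lin: "Tl l kk x = \<eta> * ZZ (l # l1 # L2) x + (1 + exp \<eta>) * ZZ (l # R) x" for x
        unfolding kk_def T_lin[where f="ZZ (l1 # L2)" and g="ZZ R" and l=l and a=\<eta> and b="1 + exp \<eta>" and x=x, OF PZ ZZ_PCZ[OF Rne]]
        using ZZ_cons[of "l1 # L2" l x] ZZ_cons[OF Rne, of l x] by simp
      have "INTR (ZZ (l # l1 # L2)) (\<lambda>x. l * ZZ (l # l1 # L2) x + (1 + exp l) * ZZ (l1 # L2) x)"
        by (rule ZZ_INTR_head) simp
      moreover have "l * ZZ (l # l1 # L2) x + (1 + exp l) * ZZ (l1 # L2) x
          = \<eta> * ZZ (l # l1 # L2) x + (1 + exp \<eta>) * ZZ (l # R) x" for x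
        using ibp[of x] lin[of x] ZZ_cons[of "l1 # L2" l x] by simp
      ultimately have "INTR (ZZ (l # l1 # L2)) (\<lambda>x. \<eta> * ZZ (l # l1 # L2) x + (1 + exp \<eta>) * ZZ (l # R) x)"
        by (rule INTR_cong)
      then show ?thesis unfolding rem R_def .
    qed
  qed
qed

definition HH :: "real \<Rightarrow> real list \<Rightarrow> real \<Rightarrow> real" where
  "HH l L x = l * ZZ (l # L) x + (1 + exp l) * ZZ L x"

lemma HH_AP: "AP (HH l L)"
  unfolding HH_def by (rule AP_lin[OF ZZ_AP ZZ_AP])

lemma HH_PCZ: "L \<noteq> [] \<Longrightarrow> PCZ (HH l L)"
  unfolding HH_def by (intro PCZ_add PCZ_cmult ZZ_PCZ) auto

lemma HH_INTR: "L \<noteq> [] \<Longrightarrow> INTR (ZZ (l # L)) (HH l L)"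
  unfolding HH_def[abs_def] by (rule ZZ_INTR_head)

lemma HH_pos: "L \<noteq> [] \<Longrightarrow> \<exists>y0. \<forall>x\<in>{y0..<y0+1}. HH l L x \<ge> 0"
proof (induction L arbitrary: l)
  case Nil then show ?case by simp
next
  case (Cons l1 L2)
  show ?case
  proof (cases "L2 = []")
    case True
    define a where "a = l"
    define b where "b = l1"
    define k where "k = (\<lambda>x. a * (1 + exp b) * EE (a - b) x - a * exp b * EE (a - b) 1 + (1 + exp a))"
    have kc: "continuous_on {0..1} k" unfolding k_def using EE_cont[of "a - b"]
      by (intro continuous_on_add continuous_on_diff continuous_on_mult continuous_on_const) auto
    have km: "mono_on {0..1} k \<or> antimono_on {0..1} k"
    proof (cases "a * (1 + exp b) \<ge> 0")
      case True
      have "mono_on {0..1} k"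
      proof (rule mono_onI)
        fix r s :: real assume "r \<in> {0..1}" "s \<in> {0..1}" "r \<le> s"
        then have "EE (a - b) r \<le> EE (a - b) s" using mono_onD[OF EE_mono] by blast
        then show "k r \<le> k s" unfolding k_def using True by (simp add: mult_left_mono)
      qed
      then show ?thesis by blast
    next
      case False
      have "antimono_on {0..1} k"
      proof (rule monotone_onI)
        fix r s :: real assume "r \<in> {0..1}" "s \<in> {0..1}" "r \<le> s"
        then have "EE (a - b) r \<le> EE (a - b) s" using mono_onD[OF EE_mono] by blast
        then show "k s \<le> k r" unfolding k_def using False by (simp add: mult_left_mono_neg)
      qed
      then show ?thesis by blast
    qed
    have kw: "\<forall>x\<in>{0..<1}. \<exists>w>0. HH l (l1 # L2) x = w * k x"
    proof
      fix x :: real assume x: "x \<in> {0..<1}"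
      have "HH l (l1 # L2) x = a * ZZ [a, b] x + (1 + exp a) * ZZ [b] x"
        using True by (simp add: HH_def a_def b_def)
      also have "\<dots> = a * (exp (b*x) * ((1 + exp b) * EE (a - b) x - exp b * EE (a - b) 1)) + (1 + exp a) * exp (b*x)"
        using ZZ_two[OF x, of a b] ZZ_single[OF x, of b] by simp
      also have "\<dots> = exp (b*x) * k x" unfolding k_def by (simp add: algebra_simps)
      finally have "HH l (l1 # L2) x = exp (b*x) * k x" .
      then show "\<exists>w>0. HH l (l1 # L2) x = w * k x" by (intro exI[of _ "exp (b*x)"]) simp
    qed
    show ?thesis by (rule SC[OF HH_AP kc km kw])
  next
    case False
    obtain a where a: "\<forall>x\<in>{a..<a+1}. HH l1 L2 x \<ge> 0" using Cons.IH[OF False] by blast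
    have PZ: "PCZ (ZZ (l1 # L2))" by (rule ZZ_PCZ) simp
    have ibp: "Tl l (HH l1 L2) x = HH l (l1 # L2) x" for x
    proof -
      have "Tl l (HH l1 L2) x = l * Tl l (ZZ (l1 # L2)) x + (1 + exp l) * ZZ (l1 # L2) x"
        by (rule T_IBP[OF ZZ_AP PZ ZZ_cont[OF False] HH_PCZ[OF False] HH_INTR[OF False]])
      then show ?thesis unfolding HH_def using ZZ_cons[of "l1 # L2" l x] by simp
    qed
    obtain b where "\<forall>x\<in>{b..<b+1}. Tl l (HH l1 L2) x \<ge> 0"
      using T_pos[OF HH_AP HH_PCZ[OF False] a] by blast
    then show ?thesis using ibp by auto
  qed
qed

lemma mi_cong: "monotone_intv S g \<Longrightarrow> (\<And>x. x \<in> S \<Longrightarrow> f x = g x) \<Longrightarrow> monotone_intv S f"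
  unfolding monotone_intv_def monotone_on_def by auto

lemma mi_neg: "monotone_intv S f \<Longrightarrow> monotone_intv S (\<lambda>x. - f x)"
  unfolding monotone_intv_def monotone_on_def by auto

lemma mi_cmult: "c \<ge> 0 \<Longrightarrow> monotone_intv S f \<Longrightarrow> monotone_intv S (\<lambda>x. c * f x)"
  unfolding monotone_intv_def monotone_on_def by (auto intro: mult_left_mono)

lemma part1: "L \<noteq> [] \<Longrightarrow> \<exists>x0. \<forall>k::int. monotone_intv {x0 + of_int k ..< x0 + of_int k + 1} (ZZ L)"
proof (cases L)
  case Nil
  assume "L \<noteq> []" then show ?thesis using Nil by simp
next
  case (Cons l L1)
  show ?thesis
  proof (cases "L1 = []")
    case True
    have "monotone_intv {0 + of_int k ..< 0 + of_int k + 1} (ZZ L)" for k :: int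
    proof -
      define S where "S = {0 + real_of_int k ..< 0 + real_of_int k + 1}"
      have eq: "ZZ L x = (if even k then 1 else -1) * exp (l * (x - of_int k))" if "x \<in> S" for x
      proof -
        have x0: "x - of_int k \<in> {0..<1}" using that unfolding S_def by auto
        have "ZZ L x = ZZ L ((x - of_int k) + of_int k)" by simp
        also have "\<dots> = (if even k then ZZ L (x - of_int k) else - ZZ L (x - of_int k))"
          by (rule AP_int[OF ZZ_AP])
        finally show ?thesis using ZZ_single[OF x0, of l] Cons True by simp
      qed
      have em: "monotone_intv S (\<lambda>x. exp (l * (x - of_int k)))"
      proof (cases "l \<ge> 0")
        case True
        then have "mono_on S (\<lambda>x. exp (l * (x - of_int k)))"
          by (intro mono_onI) (simp add: mult_left_mono)
        then show ?thesis unfolding monotone_intv_def by blast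
      next
        case False
        then have "antimono_on S (\<lambda>x. exp (l * (x - of_int k)))"
          by (intro monotone_onI) (simp add: mult_left_mono_neg)
        then show ?thesis unfolding monotone_intv_def by blast
      qed
      have "monotone_intv S (\<lambda>x. (if even k then 1 else -1) * exp (l * (x - of_int k)))"
        using em mi_neg[OF em] by simp
      then show ?thesis unfolding S_def[symmetric] by (rule mi_cong) (use eq in auto)
    qed
    then show ?thesis by blast
  next
    case False
    have IN: "INTR (ZZ L) (HH l L1)" unfolding Cons by (rule HH_INTR[OF False])
    have LH: "LI (HH l L1)" by (rule PCZ_LI[OF HH_PCZ[OF False]])
    obtain y0 where y0: "\<forall>x\<in>{y0..<y0+1}. HH l L1 x \<ge> 0" using HH_pos[OF False] by blast
    have "monotone_intv {y0 + of_int k ..< y0 + of_int k + 1} (ZZ L)" for k :: int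
    proof -
      define S where "S = {y0 + real_of_int k ..< y0 + real_of_int k + 1}"
      have hs: "HH l L1 x = (if even k then HH l L1 (x - of_int k) else - HH l L1 (x - of_int k))" for x
        using AP_int[OF HH_AP, where x="x - of_int k" and k=k] by simp
      have hin: "HH l L1 (x - of_int k) \<ge> 0" if "x \<in> S" for x
        using y0 that unfolding S_def by auto
      have diff: "ZZ L y - ZZ L x = integral {x..y} (HH l L1)" if "x \<le> y" for x y
        using IN that unfolding INTR_def by blast
      have int: "HH l L1 integrable_on {x..y}" for x y using LH unfolding LI_def by blast
      show ?thesis
      proof (cases "even k")
        case True
        have "mono_on S (ZZ L)"
        proof (rule mono_onI)
          fix r s assume rs: "r \<in> S" "s \<in> S" "r \<le> s"
          have "integral {r..s} (HH l L1) \<ge> 0"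
          proof (rule integral_nonneg[OF int])
            fix u assume "u \<in> {r..s}"
            then have "u \<in> S" using rs unfolding S_def by auto
            then show "0 \<le> HH l L1 u" using hin hs[of u] True by simp
          qed
          then show "ZZ L r \<le> ZZ L s" using diff[OF rs(3)] by simp
        qed
        then show ?thesis unfolding monotone_intv_def S_def by blast
      next
        case False
        have "antimono_on S (ZZ L)"
        proof (rule monotone_onI)
          fix r s assume rs: "r \<in> S" "s \<in> S" "r \<le> s"
          have "integral {r..s} (\<lambda>u. - HH l L1 u) \<ge> 0"
          proof (rule integral_nonneg)
            show "(\<lambda>u. - HH l L1 u) integrable_on {r..s}" using int by (rule integrable_neg)
            fix u assume "u \<in> {r..s}"
            then have "u \<in> S" using rs unfolding S_def by auto
            then show "0 \<le> - HH l L1 u" using hin hs[of u] False by simp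
          qed
          then show "ZZ L s \<le> ZZ L r" using diff[OF rs(3)] by simp
        qed
        then show ?thesis unfolding monotone_intv_def S_def by blast
      qed
    qed
    then show ?thesis by blast
  qed
qed

lemma rderiv_eq: "(f has_real_derivative D) (at_right x) \<Longrightarrow> rderiv f x = D"
  unfolding rderiv_def
proof (rule the_equality)
  fix D' assume "(f has_real_derivative D') (at_right x)" "(f has_real_derivative D) (at_right x)"
  then show "D' = D" unfolding has_field_derivative_iff
    using tendsto_unique[OF trivial_limit_at_right_real] by blast
qed

lemma Dop_single: "Dop \<eta> (ZZ [\<eta>]) x = 0"
proof -
  define k where "k = floor x"
  define C where "C = (if even k then 1 else -1) * exp (- \<eta> * of_int k)"
  have x1: "real_of_int k \<le> x" "x < real_of_int k + 1" unfolding k_def by linarith+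
  have ee: "at x within {x..real_of_int k + 1} = at_right x" by (rule at_within_Icc_at_right) (use x1 in simp)
  have eq: "C = exp (- \<eta> * y) * ZZ [\<eta>] y" if "y \<in> {x..real_of_int k + 1}" "dist y x < real_of_int k + 1 - x" for y
  proof -
    have y0: "y - of_int k \<in> {0..<1}" using that x1 by (auto simp: dist_real_def)
    have "ZZ [\<eta>] y = ZZ [\<eta>] ((y - of_int k) + of_int k)" by simp
    also have "\<dots> = (if even k then ZZ [\<eta>] (y - of_int k) else - ZZ [\<eta>] (y - of_int k))"
      by (rule AP_int[OF ZZ_AP])
    finally have "ZZ [\<eta>] y = (if even k then 1 else -1) * exp (\<eta> * (y - of_int k))"
      using ZZ_single[OF y0, of \<eta>] by simp
    moreover have "exp (- \<eta> * y) * exp (\<eta> * (y - of_int k)) = exp (- \<eta> * of_int k)"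
      by (simp add: mult_exp_exp algebra_simps)
    ultimately show ?thesis unfolding C_def by (simp add: algebra_simps)
  qed
  have "((\<lambda>y. C) has_real_derivative 0) (at x within {x..real_of_int k + 1})" by (rule DERIV_const)
  then have "((\<lambda>y. exp (- \<eta> * y) * ZZ [\<eta>] y) has_real_derivative 0) (at x within {x..real_of_int k + 1})"
    by (rule has_field_derivative_transform_within[where d="real_of_int k + 1 - x"]) (use x1 eq in auto)
  then have "rderiv (\<lambda>y. exp (- \<eta> * y) * ZZ [\<eta>] y) x = 0" using ee by (intro rderiv_eq) simp
  then show ?thesis unfolding Dop_def by simp
qed

lemma Dop_gen:
  assumes "L \<noteq> []" "\<eta> \<in> set (l # L)"
  shows "Dop \<eta> (ZZ (l # L)) x = (1 + exp \<eta>) * ZZ (remove1 \<eta> (l # L)) x"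
proof -
  define R where "R = remove1 \<eta> (l # L)"
  have Rne: "R \<noteq> []" unfolding R_def using assms(1) by (cases L) auto
  define h where "h = (\<lambda>x. \<eta> * ZZ (l # L) x + (1 + exp \<eta>) * ZZ R x)"
  have IN: "INTR (ZZ (l # L)) h" unfolding h_def R_def by (rule INT_gen[OF assms])
  have Ph: "PCZ h" unfolding h_def by (intro PCZ_add PCZ_cmult ZZ_PCZ Rne) simp
  have d: "(ZZ (l # L) has_real_derivative h x) (at_right x)"
    by (rule INTR_rderiv[OF IN PCZ_LI[OF Ph] PCZ_rcont[OF Ph]])
  have e: "((\<lambda>y. exp (- \<eta> * y)) has_real_derivative exp (- \<eta> * x) * (- \<eta>)) (at_right x)"
    by (intro derivative_eq_intros) auto
  have "((\<lambda>y. exp (- \<eta> * y) * ZZ (l # L) y) has_real_derivative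
         exp (- \<eta> * x) * (- \<eta>) * ZZ (l # L) x + h x * exp (- \<eta> * x)) (at_right x)"
    by (rule DERIV_mult[OF e d])
  moreover have "exp (- \<eta> * x) * (- \<eta>) * ZZ (l # L) x + h x * exp (- \<eta> * x)
     = exp (- \<eta> * x) * ((1 + exp \<eta>) * ZZ R x)"
    unfolding h_def by (simp add: algebra_simps)
  ultimately have "rderiv (\<lambda>y. exp (- \<eta> * y) * ZZ (l # L) y) x = exp (- \<eta> * x) * ((1 + exp \<eta>) * ZZ R x)"
    by (intro rderiv_eq) simp
  then show ?thesis unfolding Dop_def R_def[symmetric]
    by (simp add: mult.assoc[symmetric] mult_exp_exp)
qed

theorem mainTheorem7:
  fixes \<Lambda> :: "real list"
  assumes "\<Lambda> \<noteq> []"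
  shows "(\<exists>x0::real. \<forall>k::int.
            monotone_intv {x0 + of_int k ..< x0 + of_int k + 1} (zak_half (expB \<Lambda>)))
       \<and> (\<forall>\<eta>\<in>set \<Lambda>. \<exists>y0::real. \<forall>k::int.
            monotone_intv {y0 + of_int k ..< y0 + of_int k + 1} (Dop \<eta> (zak_half (expB \<Lambda>))))"
proof
  show "\<exists>x0::real. \<forall>k::int. monotone_intv {x0 + of_int k ..< x0 + of_int k + 1} (zak_half (expB \<Lambda>))"
    using part1[OF assms] unfolding ZZ_def .
next
  show "\<forall>\<eta>\<in>set \<Lambda>. \<exists>y0::real. \<forall>k::int.
            monotone_intv {y0 + of_int k ..< y0 + of_int k + 1} (Dop \<eta> (zak_half (expB \<Lambda>)))"
  proof
    fix \<eta> assume eta: "\<eta> \<in> set \<Lambda>"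
    obtain l L where LL: "\<Lambda> = l # L" using assms by (cases \<Lambda>) auto
    show "\<exists>y0::real. \<forall>k::int.
            monotone_intv {y0 + of_int k ..< y0 + of_int k + 1} (Dop \<eta> (zak_half (expB \<Lambda>)))"
    proof (cases "L = []")
      case True
      then have "\<eta> = l" using eta LL by simp
      then have "Dop \<eta> (zak_half (expB \<Lambda>)) = (\<lambda>x. 0)"
        using Dop_single[of \<eta>] LL True unfolding ZZ_def by auto
      moreover have "monotone_intv S (\<lambda>x::real. 0::real)" for S
        unfolding monotone_intv_def by (auto intro: mono_onI)
      ultimately show ?thesis by simp
    next
      case False
      define R where "R = remove1 \<eta> (l # L)"
      have Rne: "R \<noteq> []" unfolding R_def using False by (cases L) auto
      obtain y0 where y0: "\<forall>k::int. monotone_intv {y0 + of_int k ..< y0 + of_int k + 1} (ZZ R)"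
        using part1[OF Rne] by blast
      have "Dop \<eta> (zak_half (expB \<Lambda>)) x = (1 + exp \<eta>) * ZZ R x" for x
        using Dop_gen[OF False, of \<eta> l x] eta LL unfolding R_def ZZ_def by simp
      then have "Dop \<eta> (zak_half (expB \<Lambda>)) = (\<lambda>x. (1 + exp \<eta>) * ZZ R x)" by (rule ext)
      moreover have "monotone_intv {y0 + of_int k ..< y0 + of_int k + 1} (\<lambda>x. (1 + exp \<eta>) * ZZ R x)" for k :: int
        by (rule mi_cmult[OF _ y0[rule_format]]) (simp add: add_nonneg_nonneg)
      ultimately show ?thesis by auto
    qed
  qed
qed

end
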